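(* Assume $r(\boldsymbol\gamma)\le1<2+\alpha\le R(\boldsymbol\gamma)$. Let $(\mathbf A^\dagger,\mathbf q^\dagger)$ maximize $\Omega$, let $(\mathbf A^\ddagger,\mathbf q^\ddagger)$ maximize $\Pi$ (both over $\mathcal A\times\mathbb R^n_{\ge0}$), and let $(\mathbf A^{\rm d},\mathbf q^{\rm d})$ be an equilibrium with $\mathbf A^{\rm d}\mathbf q^{\rm d}=\boldsymbol\beta$ and $\mathbf q^{\rm d}=\boldsymbol\gamma/(2+\alpha)$. Then $$\bar s_{\boldsymbol\gamma}(\mathbf A^\dagger)=\bar s_{\boldsymbol\gamma}(\mathbf A^\ddagger)=\frac{1-\|\boldsymbol\gamma\|_2^2}{n(n-1)}<\frac{(2+\alpha)^2-\|\boldsymbol\gamma\|_2^2}{n(n-1)}=\bar s_{\boldsymbol\gamma}(\mathbf A^{\rm d}).$$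
   Context: Model: integers $n\ge2$, $m\ge2$; $\alpha>0$, $\boldsymbol\beta\in\mathbb R^m$ with $\|\boldsymbol\beta\|_2=1$, $\boldsymbol\gamma\in\mathbb R^n$ with all $\gamma_i>0$. $\mathcal A$ is the set of real $m\times n$ matrices $\mathbf A=[\mathbf a_1,\dots,\mathbf a_n]$ with all $\|\mathbf a_i\|_2=1$. With $\mathbf x=\mathbf A\mathbf q$: $\Omega(\mathbf A,\mathbf q)=\alpha(\mathbf x^\top\boldsymbol\beta-\tfrac12\mathbf x^\top\mathbf x)+\mathbf q^\top\boldsymbol\gamma-\tfrac12\mathbf q^\top\mathbf q$, $\Pi(\mathbf A,\mathbf q)=\alpha(\mathbf x^\top\boldsymbol\beta-\mathbf x^\top\mathbf x)+\mathbf q^\top\boldsymbol\gamma-\mathbf q^\top\mathbf q$. Oligopoly: firm $i$ chooses unit $\mathbf a_i$ and $q_i\ge0$ to maximize $\Pi_i=\alpha q_i\mathbf a_i^\top(\boldsymbol\beta-\sum_{j\ne i}q_j\mathbf a_j)-(1+\alpha)q_i^2+\gamma_iq_i$ given others; an equilibrium is a profile of mutual best responses. $R(\mathbf v)=\|\mathbf v\|_1$, $r(\mathbf v)=2\|\mathbf v\|_\infty-\|\mathbf v\|_1$. Weighted average cosine similarity: $\bar s_{\boldsymbol\gamma}(\mathbf A)=\binom n2^{-1}\sum_{1\le i<j\le n}\gamma_i\gamma_j\mathbf a_i^\top\mathbf a_j$. *)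

theory Defs
  imports "HOL-Analysis.Analysis"
begin

text \<open>Vectors in R^m are real^'m, vectors in R^n are real^'n; an m x n matrix
  A = [a_1,...,a_n] is real^'n^'m, with a_i = column i A.\<close>

definition unit_cols :: "real^'n^'m \<Rightarrow> bool" where
  "unit_cols A \<longleftrightarrow> (\<forall>i. norm (column i A) = 1)"

definition nonneg_vec :: "real^'n \<Rightarrow> bool" where
  "nonneg_vec q \<longleftrightarrow> (\<forall>i. q $ i \<ge> 0)"

definition Omega :: "real \<Rightarrow> real^'m \<Rightarrow> real^'n \<Rightarrow> real^'n^'m \<Rightarrow> real^'n \<Rightarrow> real" where
  "Omega \<alpha> \<beta> \<gamma> A q = (let x = A *v q in
     \<alpha> * (x \<bullet> \<beta> - (1/2) * (x \<bullet> x)) + q \<bullet> \<gamma> - (1/2) * (q \<bullet> q))"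

definition PiW :: "real \<Rightarrow> real^'m \<Rightarrow> real^'n \<Rightarrow> real^'n^'m \<Rightarrow> real^'n \<Rightarrow> real" where
  "PiW \<alpha> \<beta> \<gamma> A q = (let x = A *v q in
     \<alpha> * (x \<bullet> \<beta> - x \<bullet> x) + q \<bullet> \<gamma> - q \<bullet> q)"

definition firm_profit :: "real \<Rightarrow> real^'m \<Rightarrow> real^'n \<Rightarrow> real^'n^'m \<Rightarrow> real^'n \<Rightarrow> 'n \<Rightarrow> real" where
  "firm_profit \<alpha> \<beta> \<gamma> A q i =
     \<alpha> * q$i * (column i A \<bullet> (\<beta> - (\<Sum>j\<in>UNIV - {i}. q$j *\<^sub>R column j A)))
     - (1 + \<alpha>) * (q$i)^2 + \<gamma>$i * q$i"

definition set_col :: "real^'n^'m \<Rightarrow> 'n \<Rightarrow> real^'m \<Rightarrow> real^'n^'m" where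
  "set_col A i a = (\<chi> r k. if k = i then a $ r else A $ r $ k)"

definition set_comp :: "real^'n \<Rightarrow> 'n \<Rightarrow> real \<Rightarrow> real^'n" where
  "set_comp q i t = (\<chi> k. if k = i then t else q $ k)"

definition is_max_Omega where
  "is_max_Omega \<alpha> \<beta> \<gamma> A q \<longleftrightarrow> unit_cols A \<and> nonneg_vec q \<and>
     (\<forall>A' q'. unit_cols A' \<and> nonneg_vec q' \<longrightarrow> Omega \<alpha> \<beta> \<gamma> A' q' \<le> Omega \<alpha> \<beta> \<gamma> A q)"

definition is_max_Pi where
  "is_max_Pi \<alpha> \<beta> \<gamma> A q \<longleftrightarrow> unit_cols A \<and> nonneg_vec q \<and>
     (\<forall>A' q'. unit_cols A' \<and> nonneg_vec q' \<longrightarrow> PiW \<alpha> \<beta> \<gamma> A' q' \<le> PiW \<alpha> \<beta> \<gamma> A q)"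

definition is_equilibrium where
  "is_equilibrium \<alpha> \<beta> \<gamma> A q \<longleftrightarrow> unit_cols A \<and> nonneg_vec q \<and>
     (\<forall>i a t. norm a = 1 \<and> t \<ge> 0 \<longrightarrow>
        firm_profit \<alpha> \<beta> \<gamma> (set_col A i a) (set_comp q i t) i \<le> firm_profit \<alpha> \<beta> \<gamma> A q i)"

definition l1norm :: "real^'n \<Rightarrow> real" where
  "l1norm v = (\<Sum>i\<in>UNIV. \<bar>v $ i\<bar>)"

definition linfnorm :: "real^'n \<Rightarrow> real" where
  "linfnorm v = Max (range (\<lambda>i. \<bar>v $ i\<bar>))"

definition R_fun :: "real^'n \<Rightarrow> real" where
  "R_fun v = l1norm v"

definition r_fun :: "real^'n \<Rightarrow> real" where
  "r_fun v = 2 * linfnorm v - l1norm v"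

definition avg_cos_sim :: "real^('n::{finite,linorder}) \<Rightarrow> real^('n::{finite,linorder})^'m \<Rightarrow> real" where
  "avg_cos_sim \<gamma> A = (\<Sum>(i,j)\<in>{(i,j). i < j}. \<gamma>$i * \<gamma>$j * (column i A \<bullet> column j A))
                        / real (CARD('n) choose 2)"

end

theory Submission imports Defs begin

lemma tri_point:
  fixes s c rho :: real
  assumes "0 \<le> s" "0 < c" "\<bar>s - c\<bar> \<le> rho" "rho \<le> s + c"
  shows "\<exists>w. cmod w = 1 \<and> cmod (complex_of_real s + complex_of_real c * w) = rho"
proof (cases "s = 0")
  case True
  then have "rho = c" using assms by auto
  then show ?thesis using True assms by (intro exI[of _ 1]) auto
next
  case False
  hence sp: "s > 0" using assms by auto
  have r0: "0 \<le> rho" using assms(3) by linarith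
  define cs where "cs = (rho^2 - s^2 - c^2) / (2 * s * c)"
  have pp: "2 * s * c > 0" using sp assms(2) by simp
  have h1: "rho^2 \<le> (s+c)^2" by (rule power_mono) (use assms r0 in auto)
  have h2: "\<bar>s-c\<bar>^2 \<le> rho^2" by (rule power_mono) (use assms in auto)
  have h1': "rho^2 - s^2 - c^2 \<le> 2 * s * c" using h1 unfolding power2_sum by linarith
  have h2': "-(2 * s * c) \<le> rho^2 - s^2 - c^2" using h2 unfolding power2_abs power2_diff by linarith
  have a1: "cs \<le> 1" unfolding cs_def using pp h1' by (simp add: divide_le_eq)
  have a2: "-1 \<le> cs" unfolding cs_def using pp h2' by (simp add: le_divide_eq)
  have co2: "cs^2 \<le> 1" using a1 a2 by (simp add: abs_le_iff abs_square_le_1)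
  define w where "w = Complex cs (sqrt (1 - cs^2))"
  have "cmod w = 1" unfolding w_def cmod_def using co2 by simp
  moreover have "(cmod (complex_of_real s + complex_of_real c * w))^2 = rho^2"
  proof -
    have "(cmod (complex_of_real s + complex_of_real c * w))^2 = (s + c*cs)^2 + (c * sqrt (1 - cs^2))^2"
      unfolding w_def cmod_def by (simp add: complex_of_real_def)
    also have "\<dots> = s^2 + 2 * s * c * cs + c^2" using co2 by (simp add: power2_eq_square algebra_simps power_mult_distrib)
    also have "2 * s * c * cs = rho^2 - s^2 - c^2" unfolding cs_def using pp
      by (metis less_irrefl nonzero_mult_div_cancel_left times_divide_eq_right)
    finally show ?thesis by simp
  qed
  ultimately show ?thesis using r0 by (metis norm_ge_zero power2_eq_iff_nonneg)
qed


lemma polygon: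
  fixes g :: "'a \<Rightarrow> real"
  assumes "finite I" "I \<noteq> {}"
  shows "(\<forall>i\<in>I. g i > 0) \<Longrightarrow> 0 \<le> rho \<Longrightarrow> rho \<le> sum g I \<Longrightarrow> (\<forall>i\<in>I. 2 * g i - sum g I \<le> rho)
    \<Longrightarrow> \<exists>z. (\<forall>i\<in>I. cmod (z i) = 1) \<and> (\<Sum>i\<in>I. complex_of_real (g i) * z i) = complex_of_real rho"
  using assms
proof (induction I arbitrary: rho rule: finite_ne_induct)
  case (singleton x)
  then have "rho = g x" by auto
  then show ?case by (intro exI[of _ "\<lambda>_. 1"]) auto
next
  case (insert x F)
  define c where "c = g x"
  define S where "S = sum g F"
  have sI: "sum g (insert x F) = c + S" unfolding c_def S_def using insert by simp
  have cp: "c > 0" using insert c_def by auto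
  have Sge: "\<And>i. i \<in> F \<Longrightarrow> g i \<le> S" unfolding S_def
    by (rule member_le_sum) (use insert in auto)
  define L where "L = Max ((\<lambda>i. 2 * g i - S) ` F)"
  have Lge: "\<And>i. i \<in> F \<Longrightarrow> 2 * g i - S \<le> L" unfolding L_def using insert by auto
  obtain i0 where i0: "i0 \<in> F" "L = 2 * g i0 - S" unfolding L_def using insert
    by (metis (no_types, lifting) Max_in finite_imageI image_iff image_is_empty)
  define sg where "sg = max \<bar>rho - c\<bar> L"
  have s0: "0 \<le> sg" unfolding sg_def by simp
  have sS: "sg \<le> S" unfolding sg_def using insert.prems(3,4) sI i0 Sge[OF i0(1)] by (auto simp: c_def)
  have sU: "sg \<le> rho + c" unfolding sg_def using insert.prems(2,4) sI i0 cp by (auto simp: c_def)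
  have sL: "\<forall>i\<in>F. 2 * g i - S \<le> sg" using Lge unfolding sg_def by force
  obtain z where z: "\<forall>i\<in>F. cmod (z i) = 1" "(\<Sum>i\<in>F. complex_of_real (g i) * z i) = complex_of_real sg"
    using insert.IH[of sg] insert.prems(1) s0 sS sL unfolding S_def by auto
  have "\<bar>sg - c\<bar> \<le> rho" unfolding sg_def using i0 insert.prems sI cp s0 sU unfolding sg_def by auto
  then obtain w where w: "cmod w = 1" "cmod (complex_of_real sg + complex_of_real c * w) = rho"
    using tri_point[of sg c rho] s0 cp sU unfolding sg_def by fastforce
  define T where "T = complex_of_real sg + complex_of_real c * w"
  define u where "u = (if T = 0 then 1 else complex_of_real rho / T)"
  have u1: "cmod u = 1" using w unfolding u_def T_def by (auto simp: norm_divide)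
  have uT: "u * T = complex_of_real rho" using w unfolding u_def T_def by auto
  define z' where "z' = (\<lambda>i. u * (z(x := w)) i)"
  have "(\<Sum>i\<in>insert x F. complex_of_real (g i) * z' i) = u * (\<Sum>i\<in>insert x F. complex_of_real (g i) * (z(x := w)) i)"
    unfolding z'_def by (simp add: sum_distrib_left algebra_simps)
  also have "(\<Sum>i\<in>insert x F. complex_of_real (g i) * (z(x := w)) i) = complex_of_real (g x) * w + (\<Sum>i\<in>F. complex_of_real (g i) * z i)"
    using insert.hyps by (simp add: sum.insert) (intro sum.cong, auto)
  also have "\<dots> = T" unfolding T_def c_def using z by simp
  finally have "(\<Sum>i\<in>insert x F. complex_of_real (g i) * z' i) = complex_of_real rho" using uT by simp
  moreover have "\<forall>i\<in>insert x F. cmod (z' i) = 1" unfolding z'_def using z w u1 by (auto simp: norm_mult)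
  ultimately show ?case by blast
qed


lemma exists_A:
  fixes \<beta> :: "real^'m" and \<gamma> :: "real^'n"
  assumes m2: "CARD('m) \<ge> 2" and nb: "norm \<beta> = 1" and gp: "\<forall>i. \<gamma> $ i > 0"
    and r1: "r_fun \<gamma> \<le> 1" and R1: "1 \<le> R_fun \<gamma>"
  shows "\<exists>A :: real^'n^'m. unit_cols A \<and> A *v \<gamma> = \<beta>"
proof -
  have l1: "l1norm \<gamma> = (\<Sum>i\<in>UNIV. \<gamma> $ i)" unfolding l1norm_def using gp
    by (intro sum.cong) (auto simp: less_imp_le)
  have linf: "\<And>i. \<gamma> $ i \<le> linfnorm \<gamma>" unfolding linfnorm_def
    by (rule order_trans[OF abs_ge_self]) (rule Max_ge, auto)
  obtain z where z: "\<forall>i\<in>UNIV. cmod (z i) = 1"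
      "(\<Sum>i\<in>UNIV. complex_of_real (\<gamma> $ i) * z i) = complex_of_real 1"
  proof -
    have "\<exists>z. (\<forall>i\<in>UNIV. cmod (z i) = 1) \<and> (\<Sum>i\<in>UNIV. complex_of_real (\<gamma> $ i) * z i) = complex_of_real 1"
    proof (rule polygon)
      show "\<forall>i\<in>UNIV. 2 * \<gamma> $ i - (\<Sum>i\<in>UNIV. \<gamma> $ i) \<le> 1"
        using linf r1 l1 unfolding r_fun_def by (smt (verit))
      show "1 \<le> (\<Sum>i\<in>UNIV. \<gamma> $ i)" using R1 l1 unfolding R_fun_def by simp
    qed (use gp in auto)
    then show ?thesis using that by blast
  qed
  have "DIM(real^'m) \<ge> 2" using m2 by simp
  then obtain y :: "real^'m" where y: "y \<noteq> 0" "orthogonal \<beta> y"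
    using orthogonal_to_vector_exists by blast
  define u where "u = y /\<^sub>R norm y"
  have nu: "norm u = 1" unfolding u_def using y by simp
  have bu: "\<beta> \<bullet> u = 0" unfolding u_def using y by (simp add: orthogonal_def)
  define A :: "real^'n^'m" where "A = (\<chi> r k. (Re (z k) *\<^sub>R \<beta> + Im (z k) *\<^sub>R u) $ r)"
  have col: "\<And>k. column k A = Re (z k) *\<^sub>R \<beta> + Im (z k) *\<^sub>R u"
    unfolding A_def column_def by (simp add: vec_eq_iff)
  have "\<And>k. norm (column k A) = 1"
  proof -
    fix k
    have "(norm (column k A))^2 = (Re (z k))^2 + (Im (z k))^2"
      unfolding col power2_norm_eq_inner using nb nu bu
      by (simp add: inner_add_left inner_add_right inner_commute power2_eq_square norm_eq_sqrt_inner)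
    also have "\<dots> = 1" using z(1) by (metis UNIV_I cmod_power2 power_one)
    finally show "norm (column k A) = 1" by (smt (verit) norm_ge_zero power2_eq_1_iff)
  qed
  hence uc: "unit_cols A" unfolding unit_cols_def by blast
  have "A *v \<gamma> = (\<Sum>i\<in>UNIV. \<gamma> $ i *\<^sub>R column i A)"
    by (simp add: matrix_mult_sum scalar_mult_eq_scaleR)
  also have "\<dots> = (\<Sum>i\<in>UNIV. \<gamma> $ i * Re (z i)) *\<^sub>R \<beta> + (\<Sum>i\<in>UNIV. \<gamma> $ i * Im (z i)) *\<^sub>R u"
    unfolding col by (simp add: scaleR_add_right sum.distrib scaleR_sum_left)
  also have "(\<Sum>i\<in>UNIV. \<gamma> $ i * Re (z i)) = 1"
    using arg_cong[OF z(2), of Re] by (simp add: Re_sum)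
  also have "(\<Sum>i\<in>UNIV. \<gamma> $ i * Im (z i)) = 0"
    using arg_cong[OF z(2), of Im] by (simp add: Im_sum)
  finally show ?thesis using uc by auto
qed


lemma choose2_real: "real (n choose 2) = real n * (real n - 1) / 2"
proof (cases n)
  case 0 then show ?thesis by simp
next
  case (Suc k)
  have "real (Suc k choose 2) * 2 = real (Suc k) * real k"
    by (induction k) (auto simp: algebra_simps numeral_2_eq_2)
  then show ?thesis using Suc by simp
qed

lemma avg_formula:
  fixes \<gamma> :: "real^('n::{finite,linorder})" and A :: "real^('n::{finite,linorder})^'m"
  assumes uc: "unit_cols A" and v: "A *v \<gamma> = v"
  shows "avg_cos_sim \<gamma> A = ((norm v)^2 - (norm \<gamma>)^2) / (real CARD('n) * (real CARD('n) - 1))"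
proof -
  define f where "f = (\<lambda>(i::'n, j::'n). \<gamma>$i * \<gamma>$j * (column i A \<bullet> column j A))"
  define P where "P = {(i::'n, j::'n). i < j}"
  define Q where "Q = {(i::'n, j::'n). j < i}"
  define D where "D = {(i::'n, j::'n). i = j}"
  have vs: "v = (\<Sum>i\<in>UNIV. \<gamma> $ i *\<^sub>R column i A)"
    using v by (simp add: matrix_mult_sum scalar_mult_eq_scaleR)
  have "(norm v)^2 = (\<Sum>i\<in>UNIV. \<gamma> $ i *\<^sub>R column i A) \<bullet> (\<Sum>i\<in>UNIV. \<gamma> $ i *\<^sub>R column i A)"
    by (simp add: power2_norm_eq_inner flip: vs)
  also have "(\<Sum>i\<in>UNIV. \<gamma> $ i *\<^sub>R column i A) \<bullet> (\<Sum>i\<in>UNIV. \<gamma> $ i *\<^sub>R column i A)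
      = (\<Sum>i\<in>UNIV. \<Sum>j\<in>UNIV. f (i, j))"
    unfolding f_def inner_sum_left by (auto simp: inner_sum_right intro!: sum.cong)
  also have "\<dots> = sum f (UNIV \<times> UNIV)" by (simp add: sum.cartesian_product)
  also have "UNIV \<times> UNIV = P \<union> Q \<union> D" unfolding P_def Q_def D_def by auto
  also have "sum f (P \<union> Q \<union> D) = sum f P + sum f Q + sum f D"
    by (subst sum.union_disjoint, (auto simp: P_def Q_def D_def)[3])+
       (auto simp: P_def Q_def D_def)
  also have "sum f Q = sum f P"
  proof -
    have "Q = prod.swap ` P" unfolding P_def Q_def by auto
    hence "sum f Q = sum (f \<circ> prod.swap) P" by (simp add: sum.reindex)
    also have "\<dots> = sum f P" unfolding f_def by (intro sum.cong) (auto simp: inner_commute)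
    finally show ?thesis .
  qed
  also have "sum f D = (\<Sum>i\<in>UNIV. \<gamma>$i * \<gamma>$i)"
  proof -
    have "D = (\<lambda>i. (i, i)) ` UNIV" unfolding D_def by auto
    hence "sum f D = (\<Sum>i\<in>UNIV. f (i, i))" by (simp add: sum.reindex inj_on_def)
    also have "\<dots> = (\<Sum>i\<in>UNIV. \<gamma>$i * \<gamma>$i)" unfolding f_def using uc
      by (intro sum.cong) (auto simp: unit_cols_def simp flip: power2_norm_eq_inner)
    finally show ?thesis .
  qed
  also have "(\<Sum>i\<in>UNIV. \<gamma>$i * \<gamma>$i) = (norm \<gamma>)^2"
    by (simp add: power2_norm_eq_inner inner_vec_def)
  finally have key: "(norm v)^2 = 2 * sum f P + (norm \<gamma>)^2" by simp
  have "avg_cos_sim \<gamma> A = sum f P / real (CARD('n) choose 2)"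
    unfolding avg_cos_sim_def f_def P_def by simp
  also have "\<dots> = ((norm v)^2 - (norm \<gamma>)^2) / (real CARD('n) * (real CARD('n) - 1))"
    unfolding choose2_real key by (simp add: field_simps)
  finally show ?thesis .
qed


lemma Omega_id:
  assumes "norm \<beta> = 1"
  shows "Omega \<alpha> \<beta> \<gamma> A q = \<alpha> / 2 * (1 - (norm (A *v q - \<beta>))^2) + ((norm \<gamma>)^2 - (norm (q - \<gamma>))^2) / 2"
proof -
  have bb: "\<beta> \<bullet> \<beta> = 1" using assms by (simp add: power2_norm_eq_inner[symmetric])
  show ?thesis unfolding Omega_def Let_def power2_norm_eq_inner
    by (simp add: inner_diff_left inner_diff_right inner_commute bb field_simps)
qed

lemma Pi_id:
  assumes "norm \<beta> = 1"
  shows "PiW \<alpha> \<beta> \<gamma> A q = \<alpha> * (1/4 - (norm (A *v q - (1/2) *\<^sub>R \<beta>))^2) + (norm \<gamma>)^2 / 4 - (norm (q - (1/2) *\<^sub>R \<gamma>))^2"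
proof -
  have bb: "\<beta> \<bullet> \<beta> = 1" using assms by (simp add: power2_norm_eq_inner[symmetric])
  show ?thesis unfolding PiW_def Let_def power2_norm_eq_inner
    by (simp add: inner_diff_left inner_diff_right inner_commute bb algebra_simps)
qed

lemma opt_Omega:
  assumes mx: "is_max_Omega \<alpha> \<beta> \<gamma> A q" and ap: "\<alpha> > 0" and nb: "norm \<beta> = 1"
    and gp: "\<forall>i. \<gamma> $ i > 0" and ex: "unit_cols As" "As *v \<gamma> = \<beta>"
  shows "A *v \<gamma> = \<beta>"
proof -
  have "nonneg_vec \<gamma>" using gp unfolding nonneg_vec_def by (simp add: less_imp_le)
  hence "Omega \<alpha> \<beta> \<gamma> As \<gamma> \<le> Omega \<alpha> \<beta> \<gamma> A q" using mx ex unfolding is_max_Omega_def by blast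
  hence "\<alpha> / 2 + (norm \<gamma>)^2 / 2 \<le> \<alpha> / 2 * (1 - (norm (A *v q - \<beta>))^2) + ((norm \<gamma>)^2 - (norm (q - \<gamma>))^2) / 2"
    using Omega_id[OF nb, of \<alpha> \<gamma> As \<gamma>] Omega_id[OF nb, of \<alpha> \<gamma> A q] ex by simp
  hence "\<alpha> * (norm (A *v q - \<beta>))^2 + (norm (q - \<gamma>))^2 \<le> 0" by (simp add: algebra_simps)
  moreover have "0 \<le> \<alpha> * (norm (A *v q - \<beta>))^2" using ap by simp
  moreover have "0 \<le> (norm (q - \<gamma>))^2" by simp
  ultimately have "(norm (q - \<gamma>))^2 = 0" "\<alpha> * (norm (A *v q - \<beta>))^2 = 0" by linarith+
  hence "q = \<gamma>" "A *v q = \<beta>" using ap by auto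
  thus ?thesis by simp
qed

lemma opt_Pi:
  assumes mx: "is_max_Pi \<alpha> \<beta> \<gamma> A q" and ap: "\<alpha> > 0" and nb: "norm \<beta> = 1"
    and gp: "\<forall>i. \<gamma> $ i > 0" and ex: "unit_cols As" "As *v \<gamma> = \<beta>"
  shows "A *v \<gamma> = \<beta>"
proof -
  have "nonneg_vec ((1/2) *\<^sub>R \<gamma>)" using gp unfolding nonneg_vec_def by (simp add: less_imp_le)
  hence "PiW \<alpha> \<beta> \<gamma> As ((1/2) *\<^sub>R \<gamma>) \<le> PiW \<alpha> \<beta> \<gamma> A q" using mx ex unfolding is_max_Pi_def by blast
  hence "\<alpha> / 4 + (norm \<gamma>)^2 / 4 \<le> \<alpha> * (1/4 - (norm (A *v q - (1/2) *\<^sub>R \<beta>))^2) + (norm \<gamma>)^2 / 4 - (norm (q - (1/2) *\<^sub>R \<gamma>))^2"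
    using Pi_id[OF nb, of \<alpha> \<gamma> As "(1/2) *\<^sub>R \<gamma>"] Pi_id[OF nb, of \<alpha> \<gamma> A q] ex
    by (simp add: matrix_vector_mult_scaleR)
  hence "\<alpha> * (norm (A *v q - (1/2) *\<^sub>R \<beta>))^2 + (norm (q - (1/2) *\<^sub>R \<gamma>))^2 \<le> 0" by (simp add: algebra_simps)
  moreover have "0 \<le> \<alpha> * (norm (A *v q - (1/2) *\<^sub>R \<beta>))^2" using ap by simp
  moreover have "0 \<le> (norm (q - (1/2) *\<^sub>R \<gamma>))^2" by simp
  ultimately have "(norm (q - (1/2) *\<^sub>R \<gamma>))^2 = 0" "\<alpha> * (norm (A *v q - (1/2) *\<^sub>R \<beta>))^2 = 0" by linarith+
  hence "q = (1/2) *\<^sub>R \<gamma>" "A *v q = (1/2) *\<^sub>R \<beta>" using ap by auto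
  hence "(1/2) *\<^sub>R (A *v \<gamma>) = (1/2) *\<^sub>R \<beta>" by (simp add: matrix_vector_mult_scaleR)
  thus ?thesis by simp
qed

theorem corollary1:
  fixes \<alpha> :: real and \<beta> :: "real^'m" and \<gamma> :: "real^('n::{finite,linorder})"
    and A1 A2 Ad :: "real^('n::{finite,linorder})^'m" and q1 q2 qd :: "real^('n::{finite,linorder})"
  assumes "CARD('n) \<ge> 2" and "CARD('m) \<ge> 2"
    and "\<alpha> > 0" and "norm \<beta> = 1" and "\<forall>i. \<gamma> $ i > 0"
    and "r_fun \<gamma> \<le> 1" and "1 < 2 + \<alpha>" and "2 + \<alpha> \<le> R_fun \<gamma>"
    and "is_max_Omega \<alpha> \<beta> \<gamma> A1 q1"
    and "is_max_Pi \<alpha> \<beta> \<gamma> A2 q2"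
    and "is_equilibrium \<alpha> \<beta> \<gamma> Ad qd" and "Ad *v qd = \<beta>" and "qd = (1 / (2 + \<alpha>)) *\<^sub>R \<gamma>"
  shows "avg_cos_sim \<gamma> A1 = (1 - (norm \<gamma>)^2) / (real CARD('n) * (real CARD('n) - 1))
       \<and> avg_cos_sim \<gamma> A2 = (1 - (norm \<gamma>)^2) / (real CARD('n) * (real CARD('n) - 1))
       \<and> (1 - (norm \<gamma>)^2) / (real CARD('n) * (real CARD('n) - 1))
           < ((2 + \<alpha>)^2 - (norm \<gamma>)^2) / (real CARD('n) * (real CARD('n) - 1))
       \<and> avg_cos_sim \<gamma> Ad = ((2 + \<alpha>)^2 - (norm \<gamma>)^2) / (real CARD('n) * (real CARD('n) - 1))"
proof -
  obtain As where As: "unit_cols As" "As *v \<gamma> = \<beta>"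
    using exists_A[of \<beta> \<gamma>] assms(2,4,5,6,7,8) by force
  have u1: "unit_cols A1" using assms(9) unfolding is_max_Omega_def by blast
  have u2: "unit_cols A2" using assms(10) unfolding is_max_Pi_def by blast
  have ud: "unit_cols Ad" using assms(11) unfolding is_equilibrium_def by blast
  have e1: "A1 *v \<gamma> = \<beta>" using opt_Omega[OF assms(9,3,4,5) As] .
  have e2: "A2 *v \<gamma> = \<beta>" using opt_Pi[OF assms(10,3,4,5) As] .
  have "Ad *v \<gamma> = (2 + \<alpha>) *\<^sub>R (Ad *v qd)" using assms(3) assms(13)
    by (simp add: matrix_vector_mult_scaleR)
  hence ed: "Ad *v \<gamma> = (2 + \<alpha>) *\<^sub>R \<beta>" using assms(12) by simp
  have nd: "(norm ((2 + \<alpha>) *\<^sub>R \<beta>))^2 = (2 + \<alpha>)^2" using assms(3,4) by simp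
  have pos: "real CARD('n) * (real CARD('n) - 1) > 0" using assms(1) by simp
  have "(1::real) < (2 + \<alpha>)^2" using assms(3) by (simp add: power2_eq_square) (smt (verit) mult_less_cancel_left1)
  hence lt: "(1 - (norm \<gamma>)^2) / (real CARD('n) * (real CARD('n) - 1))
           < ((2 + \<alpha>)^2 - (norm \<gamma>)^2) / (real CARD('n) * (real CARD('n) - 1))"
    using pos by (simp add: divide_strict_right_mono)
  show ?thesis
    using avg_formula[OF u1 e1] avg_formula[OF u2 e2] avg_formula[OF ud ed] nd assms(4) lt by simp
qed

end
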